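(* Let $X=(x_1,\dots,x_k)$ be a composition of a positive integer $n$, and let $\ell\ge2$. The set of Dyck words of semilength $n$ with free composition $X$ and exactly $\ell$ hits is in bijection with the set of Motzkin paths of length $k-1$ having exactly $\ell-2$ flat steps at height zero.
   Context: A Dyck word of semilength $n$ is a word with $n$ zeros and $n$ ones in which every prefix has at least as many zeros as ones; it has a hit at position $2j$ ($0\le j\le n$) if its prefix of length $2j$ has exactly $j$ zeros and $j$ ones (positions $0$ and $2n$ included). Indices $i,i+1$ are linked if the $i$-th and $(i+1)$-st $0$ occupy adjacent positions and the $i$-th and $(i+1)$-st $1$ occupy adjacent positions; free blocks are maximal intervals of $\{1,\dots,n\}$ of linked consecutive indices, and the free composition lists their sizes from left to right. A Motzkin path of length $k$ is a lattice path from $(0,0)$ to $(k,0)$ with steps $(1,1)$, $(1,-1)$, $(1,0)$ (flat steps) never going below the $x$-axis; a flat step is at height zero if it lies on the $x$-axis. *)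

theory Defs
  imports Main
begin

text \<open>Words are lists over the letters 0 and 1 (type nat); positions are 1-based.\<close>

definition cnt :: "nat \<Rightarrow> nat list \<Rightarrow> nat" where
  "cnt a w = length (filter (\<lambda>x. x = a) w)"

definition dyck :: "nat \<Rightarrow> nat list \<Rightarrow> bool" where
  "dyck n w \<longleftrightarrow> set w \<subseteq> {0, 1} \<and> cnt 0 w = n \<and> cnt 1 w = n \<and>
     (\<forall>i \<le> length w. cnt 1 (take i w) \<le> cnt 0 (take i w))"

definition hits :: "nat \<Rightarrow> nat list \<Rightarrow> nat" where
  "hits n w = card {j. j \<le> n \<and> cnt 0 (take (2*j) w) = j \<and> cnt 1 (take (2*j) w) = j}"

text \<open>Position (1-based) of the i-th occurrence (i >= 1) of letter a in w.\<close>
definition pos :: "nat \<Rightarrow> nat list \<Rightarrow> nat \<Rightarrow> nat" where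
  "pos a w i = filter (\<lambda>p. w ! (p - 1) = a) [1..<length w + 1] ! (i - 1)"

definition linked :: "nat list \<Rightarrow> nat \<Rightarrow> bool" where
  "linked w i \<longleftrightarrow> pos 0 w (i+1) = pos 0 w i + 1 \<and> pos 1 w (i+1) = pos 1 w i + 1"

definition diffs :: "nat list \<Rightarrow> nat list" where
  "diffs xs = map (\<lambda>(a, b). b - a) (zip xs (tl xs))"

text \<open>Free composition of a Dyck word of semilength n: sizes of the maximal blocks of
  {1..n} of consecutively linked indices, left to right.\<close>
definition free_comp :: "nat \<Rightarrow> nat list \<Rightarrow> nat list" where
  "free_comp n w = diffs (0 # filter (\<lambda>i. \<not> linked w i) [1..<n] @ [n])"

definition motzkin :: "nat \<Rightarrow> int list \<Rightarrow> bool" where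
  "motzkin m p \<longleftrightarrow> length p = m \<and> set p \<subseteq> {1, -1, 0} \<and> sum_list p = 0 \<and>
     (\<forall>i \<le> m. sum_list (take i p) \<ge> 0)"

definition flat0 :: "int list \<Rightarrow> nat" where
  "flat0 p = card {i. i < length p \<and> p ! i = 0 \<and> sum_list (take i p) = 0}"

definition is_composition :: "nat list \<Rightarrow> nat \<Rightarrow> bool" where
  "is_composition X n \<longleftrightarrow> (\<forall>x\<in>set X. 0 < x) \<and> sum_list X = n"

end

theory Submission
  imports Defs
begin


lemma cnt_append[simp]: "cnt a (u @ v) = cnt a u + cnt a v"
  by (simp add: cnt_def)
lemma cnt_Nil[simp]: "cnt a [] = 0" by (simp add: cnt_def)
lemma cnt_Cons[simp]: "cnt a (x # v) = (if x = a then 1 else 0) + cnt a v"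
  by (simp add: cnt_def)
lemma cnt_replicate[simp]: "cnt a (replicate m x) = (if x = a then m else 0)"
  by (induction m) auto

definition IL :: "nat \<Rightarrow> nat list \<Rightarrow> nat list" where
  "IL a w = filter (\<lambda>i. w ! i = a) [0..<length w]"

lemma pos_IL: "1 \<le> i \<Longrightarrow> i \<le> cnt a w \<Longrightarrow> pos a w i = Suc (IL a w ! (i - 1))"
proof -
  have "[1..<length w + 1] = map Suc [0..<length w]" by (simp add: map_Suc_upt)
  then have "pos a w i = map Suc (IL a w) ! (i - 1)"
    by (simp add: pos_def IL_def filter_map o_def)
  moreover assume "1 \<le> i" "i \<le> cnt a w"
  moreover have "length (IL a w) = cnt a w"
  proof -
    have "map (\<lambda>p. w ! p) [0..<length w] = w"
      by (rule nth_equalityI) auto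
    then have "cnt a w = length (filter (\<lambda>x. x = a) (map (\<lambda>p. w ! p) [0..<length w]))"
      by (simp add: cnt_def)
    then show ?thesis by (simp add: IL_def filter_map o_def)
  qed
  ultimately show ?thesis by simp
qed

lemma length_IL: "length (IL a w) = cnt a w"
proof -
  have "map (\<lambda>p. w ! p) [0..<length w] = w"
    by (rule nth_equalityI) auto
  then have "cnt a w = length (filter (\<lambda>x. x = a) (map (\<lambda>p. w ! p) [0..<length w]))"
    by (simp add: cnt_def)
  then show ?thesis by (simp add: IL_def filter_map o_def)
qed

lemma IL_append: "IL a (u @ v) = IL a u @ map (\<lambda>p. p + length u) (IL a v)"
proof -
  have 1: "[0..<length (u@v)] = [0..<length u] @ [length u..<length u + length v]"
    by (simp add: upt_add_eq_append[symmetric])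
  have 2: "[length u..<length u + length v] = map (\<lambda>p. p + length u) [0..<length v]"
    by (simp add: map_add_upt add.commute)
  have 3: "filter (\<lambda>p. (u@v) ! p = a) [0..<length u] = IL a u"
    unfolding IL_def by (rule filter_cong) (auto simp: nth_append)
  have 4: "filter (\<lambda>p. (u@v) ! p = a) (map (\<lambda>p. p + length u) [0..<length v])
      = map (\<lambda>p. p + length u) (IL a v)"
    unfolding IL_def filter_map by (auto simp: o_def nth_append intro!: filter_cong arg_cong[where f="map _"])
  show ?thesis unfolding IL_def[of a "u@v"] 1 filter_append 2 3 4 ..
qed

lemma IL_replicate_same: "IL a (replicate m a) = [0..<m]"
  unfolding IL_def by (auto intro!: filter_True)

lemma IL_replicate_other: "x \<noteq> a \<Longrightarrow> IL a (replicate m x) = []"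
  unfolding IL_def by (auto simp: filter_empty_conv)

lemma pos_append1: "1 \<le> i \<Longrightarrow> i \<le> cnt a u \<Longrightarrow> pos a (u @ v) i = pos a u i"
proof -
  assume h: "1 \<le> i" "i \<le> cnt a u"
  then have "i - 1 < length (IL a u)" by (simp add: length_IL)
  with h show ?thesis by (simp add: pos_IL IL_append nth_append del: One_nat_def)
qed

lemma pos_append2: "cnt a u < i \<Longrightarrow> i \<le> cnt a u + cnt a v \<Longrightarrow>
   pos a (u @ v) i = length u + pos a v (i - cnt a u)"
proof -
  assume h: "cnt a u < i" "i \<le> cnt a u + cnt a v"
  then have "\<not> i - 1 < length (IL a u)" "i - 1 - length (IL a u) = i - cnt a u - 1"
    "i - cnt a u - 1 < length (IL a v)" by (auto simp add: length_IL)
  with h show ?thesis by (simp add: pos_IL IL_append nth_append del: One_nat_def)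
qed

lemma pos_rep_same: "1 \<le> i \<Longrightarrow> i \<le> m \<Longrightarrow> pos a (replicate m a) i = i"
  by (simp add: pos_IL IL_replicate_same)

lemma pos_ge1: "1 \<le> i \<Longrightarrow> i \<le> cnt a w \<Longrightarrow> 1 \<le> pos a w i"
  by (simp add: pos_IL)

lemma pos_letter: "1 \<le> i \<Longrightarrow> i \<le> cnt a w \<Longrightarrow> w ! (pos a w i - 1) = a \<and> pos a w i \<le> length w"
proof -
  assume h: "1 \<le> i" "i \<le> cnt a w"
  then have "IL a w ! (i - 1) \<in> set (IL a w)" by (intro nth_mem) (simp add: length_IL)
  then show ?thesis using h by (simp add: pos_IL IL_def)
qed

lemma pos_pre_other: "x \<noteq> a \<Longrightarrow> 1 \<le> i \<Longrightarrow> i \<le> cnt a v \<Longrightarrow>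
   pos a (replicate m x @ v) i = m + pos a v i"
  using pos_append2[of a "replicate m x" i v] by simp

lemma pos_pre_same: "1 \<le> i \<Longrightarrow> i \<le> m \<Longrightarrow> pos a (replicate m a @ v) i = i"
  using pos_append1[of i a "replicate m a" v] pos_rep_same by simp

lemma pos_pre_same2: "m < i \<Longrightarrow> i \<le> m + cnt a v \<Longrightarrow> pos a (replicate m a @ v) i = m + pos a v (i - m)"
  using pos_append2[of a "replicate m a" i v] by simp

definition RW :: "(nat \<times> nat) list \<Rightarrow> nat list" where
  "RW R = concat (map (\<lambda>(a, b). replicate a 0 @ replicate b 1) R)"

lemma RW_Nil[simp]: "RW [] = []" by (simp add: RW_def)
lemma RW_Cons[simp]: "RW ((a, b) # R) = replicate a 0 @ replicate b 1 @ RW R"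
  by (simp add: RW_def)

fun psums :: "nat list \<Rightarrow> nat list" where
  "psums [] = []"
| "psums (x # xs) = x # map ((+) x) (psums xs)"

lemma length_psums[simp]: "length (psums xs) = length xs"
  by (induction xs) auto

definition pa :: "(nat \<times> nat) list \<Rightarrow> nat list" where "pa R = psums (map fst R)"
definition pb :: "(nat \<times> nat) list \<Rightarrow> nat list" where "pb R = psums (map snd R)"

lemma pa_Cons[simp]: "pa ((a,b) # R) = a # map ((+) a) (pa R)" by (simp add: pa_def)
lemma pb_Cons[simp]: "pb ((a,b) # R) = b # map ((+) b) (pb R)" by (simp add: pb_def)
lemma pa_Nil[simp]: "pa [] = []" by (simp add: pa_def)
lemma pb_Nil[simp]: "pb [] = []" by (simp add: pb_def)

definition posR :: "(nat \<times> nat) list \<Rightarrow> bool" where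
  "posR R \<longleftrightarrow> (\<forall>(a, b) \<in> set R. 0 < a \<and> 0 < b)"

lemma posR_Cons[simp]: "posR ((a,b) # R) \<longleftrightarrow> 0 < a \<and> 0 < b \<and> posR R"
  by (auto simp: posR_def)
lemma posR_Nil[simp]: "posR []" by (simp add: posR_def)

lemma cnt0_RW[simp]: "cnt 0 (RW R) = sum_list (map fst R)"
  by (induction R) auto
lemma cnt1_RW[simp]: "cnt 1 (RW R) = sum_list (map snd R)"
  by (induction R) auto
lemma cnt1_RW'[simp]: "cnt (Suc 0) (RW R) = sum_list (map snd R)"
  using cnt1_RW by simp

lemma a0_RW: "posR R \<Longrightarrow> 1 \<le> i \<Longrightarrow> i < sum_list (map fst R) \<Longrightarrow>
  (pos 0 (RW R) (i+1) \<noteq> pos 0 (RW R) i + 1) \<longleftrightarrow> i \<in> set (pa R)"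
proof (induction R arbitrary: i)
  case Nil
  then show ?case by simp
next
  case (Cons ab R)
  obtain a b where ab: "ab = (a, b)" by fastforce
  note C = Cons[unfolded ab]
  have p: "0 < a" "0 < b" "posR R" using C by auto
  have sR: "i < a + sum_list (map fst R)" using C by simp
  show ?case
  proof (cases "i < a")
    case True
    then have "pos 0 (RW ((a,b)#R)) i = i" "pos 0 (RW ((a,b)#R)) (i+1) = i+1"
      using C by (auto intro!: pos_pre_same)
    moreover have "i \<notin> set (pa ((a,b)#R))" using True by auto
    ultimately show ?thesis by (simp add: ab)
  next
    case False
    note F = False
    have e: "pos 0 (replicate b (Suc 0) @ RW R) j = b + pos 0 (RW R) j" if "1 \<le> j" "j \<le> sum_list (map fst R)" for j
      using pos_pre_other[of 1 0 j "RW R" b] that by simp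
    show ?thesis
    proof (cases "i = a")
      case True
      have "pos 0 (RW ((a,b)#R)) i = a" using True p by (auto intro!: pos_pre_same)
      moreover have "pos 0 (RW ((a,b)#R)) (i+1) = a + pos 0 (replicate b 1 @ RW R) 1"
        using True sR pos_pre_same2[of a "i+1" 0 "replicate b 1 @ RW R"] by simp
      moreover have "pos 0 (replicate b 1 @ RW R) 1 = b + pos 0 (RW R) 1"
        using e[of 1] True sR by simp
      moreover have "1 \<le> pos 0 (RW R) 1" using sR True by (intro pos_ge1) auto
      ultimately show ?thesis using True p by (simp add: ab)
    next
      case False
      then have ia: "a < i" using F by simp
      have "pos 0 (RW ((a,b)#R)) i = a + (b + pos 0 (RW R) (i - a))"
        using ia sR by (simp add: pos_pre_same2 e)
      moreover have "pos 0 (RW ((a,b)#R)) (i+1) = a + (b + pos 0 (RW R) (i + 1 - a))"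
        using ia sR by (simp add: pos_pre_same2 e)
      moreover have "i + 1 - a = (i - a) + 1" using ia by simp
      moreover have "(pos 0 (RW R) (i - a + 1) \<noteq> pos 0 (RW R) (i - a) + 1) \<longleftrightarrow> i - a \<in> set (pa R)"
        using C(1)[of "i - a"] p ia sR by simp
      moreover have "i \<in> set (pa ((a,b)#R)) \<longleftrightarrow> i - a \<in> set (pa R)"
        using ia by force
      ultimately show ?thesis by (simp add: ab)
    qed
  qed
qed

lemma b1_RW: "posR R \<Longrightarrow> 1 \<le> i \<Longrightarrow> i < sum_list (map snd R) \<Longrightarrow>
  (pos 1 (RW R) (i+1) \<noteq> pos 1 (RW R) i + 1) \<longleftrightarrow> i \<in> set (pb R)"
proof (induction R arbitrary: i)
  case Nil
  then show ?case by simp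
next
  case (Cons ab R)
  obtain a b where ab: "ab = (a, b)" by fastforce
  note C = Cons[unfolded ab]
  have p: "0 < a" "0 < b" "posR R" using C by auto
  have sR: "i < b + sum_list (map snd R)" using C by simp
  have e: "pos 1 (RW ((a,b)#R)) j = a + pos 1 (replicate b 1 @ RW R) j"
    if "1 \<le> j" "j \<le> b + sum_list (map snd R)" for j
    using pos_pre_other[of 0 1 j "replicate b 1 @ RW R" a] that by simp
  show ?case
  proof (cases "i < b")
    case True
    then have "pos 1 (RW ((a,b)#R)) i = a + i" "pos 1 (RW ((a,b)#R)) (i+1) = a + (i+1)"
      using C sR e[of i] e[of "i+1"] pos_pre_same[of i b 1 "RW R"] pos_pre_same[of "i+1" b 1 "RW R"] by auto
    moreover have "i \<notin> set (pb ((a,b)#R))" using True by auto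
    ultimately show ?thesis by (simp add: ab)
  next
    case False
    note F = False
    show ?thesis
    proof (cases "i = b")
      case True
      have "pos 1 (RW ((a,b)#R)) i = a + b" using True p sR e[of b] pos_pre_same[of b b 1 "RW R"] by simp
      moreover have "pos 1 (RW ((a,b)#R)) (i+1) = a + (b + pos 1 (RW R) 1)"
        using True sR e[of "i+1"] pos_pre_same2[of b "i+1" 1 "RW R"] by simp
      moreover have "pos 1 (RW R) 1 \<noteq> 1"
      proof
        assume h1: "pos 1 (RW R) 1 = 1"
        obtain a' b' R' where R': "R = (a',b') # R'" using sR True by (cases R) auto
        have "RW R ! (pos 1 (RW R) 1 - 1) = 1" using pos_letter[of 1 1 "RW R"] sR True by simp
        then show False using h1 R' p by (simp add: nth_append)
      qed
      ultimately show ?thesis using True p by (simp add: ab)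
    next
      case False
      then have ia: "b < i" using F by simp
      have "pos 1 (RW ((a,b)#R)) i = a + (b + pos 1 (RW R) (i - b))"
        using ia sR e[of "i"] pos_pre_same2[of b "i" 1 "RW R"] by simp
      moreover have "pos 1 (RW ((a,b)#R)) (i+1) = a + (b + pos 1 (RW R) (i + 1 - b))"
        using ia sR e[of "i+1"] pos_pre_same2[of b "i+1" 1 "RW R"] by simp
      moreover have "i + 1 - b = (i - b) + 1" using ia by simp
      moreover have "(pos 1 (RW R) (i - b + 1) \<noteq> pos 1 (RW R) (i - b) + 1) \<longleftrightarrow> i - b \<in> set (pb R)"
        using C(1)[of "i - b"] p ia sR by simp
      moreover have "i \<in> set (pb ((a,b)#R)) \<longleftrightarrow> i - b \<in> set (pb R)"
        using ia by force
      ultimately show ?thesis by (simp add: ab)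
    qed
  qed
qed

lemma cnt_take_rep: "cnt c (take i (replicate m x @ v)) = (if x = c then min i m else 0) + cnt c (take (i - m) v)"
  by (simp add: take_append)

lemma length_RW: "length (RW R) = sum_list (map fst R) + sum_list (map snd R)"
  by (induction R) auto

definition ballot :: "(nat \<times> nat) list \<Rightarrow> nat \<Rightarrow> bool" where
  "ballot R d \<longleftrightarrow> (\<forall>m < length R. pb R ! m \<le> pa R ! m + d)"

lemma ballot_Cons: "ballot ((a,b) # R) d \<longleftrightarrow> b \<le> a + d \<and> ballot R (a + d - b)"
proof
  assume h: "ballot ((a,b) # R) d"
  then have b: "b \<le> a + d" unfolding ballot_def by (metis length_Cons nth_Cons_0 pa_Cons pb_Cons zero_less_Suc)
  moreover have "ballot R (a + d - b)" unfolding ballot_def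
  proof (intro allI impI)
    fix m assume "m < length R"
    then have "pb ((a,b) # R) ! Suc m \<le> pa ((a,b) # R) ! Suc m + d" using h[unfolded ballot_def, rule_format, of "Suc m"] by simp
    then show "pb R ! m \<le> pa R ! m + (a + d - b)" using \<open>m < length R\<close> b by (simp add: pa_def pb_def)
  qed
  ultimately show "b \<le> a + d \<and> ballot R (a + d - b)" by simp
next
  assume h: "b \<le> a + d \<and> ballot R (a + d - b)"
  show "ballot ((a,b) # R) d" unfolding ballot_def
  proof (intro allI impI)
    fix m assume m: "m < length ((a,b) # R)"
    show "pb ((a, b) # R) ! m \<le> pa ((a, b) # R) ! m + d"
    proof (cases m)
      case 0 then show ?thesis using h by simp
    next
      case (Suc m')
      have "m' < length R" using Suc m by simp
      moreover have "ballot R (a + d - b)" using h by simp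
      ultimately have "pb R ! m' \<le> pa R ! m' + (a + d - b)" unfolding ballot_def by blast
      then have "b + pb R ! m' \<le> a + pa R ! m' + d" using h by linarith
      then show ?thesis using Suc m h by (simp add: pa_def pb_def)
    qed
  qed
qed

lemma prefix_RW: "posR R \<Longrightarrow>
  (\<forall>i. cnt 1 (take i (RW R)) \<le> cnt 0 (take i (RW R)) + d) \<longleftrightarrow> ballot R d"
proof (induction R arbitrary: d)
  case Nil
  then show ?case by (simp add: ballot_def)
next
  case (Cons ab R)
  obtain a b where ab: "ab = (a, b)" by fastforce
  have p: "0 < a" "0 < b" "posR R" using Cons.prems ab by auto
  have IH: "(\<forall>i. cnt 1 (take i (RW R)) \<le> cnt 0 (take i (RW R)) + d') \<longleftrightarrow> ballot R d'" for d'
    using Cons.IH p by simp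
  have ct: "cnt c (take i (RW ((a,b)#R))) = (if 0 = c then min i a else 0) +
     ((if 1 = c then min (i - a) b else 0) + cnt c (take (i - a - b) (RW R)))" for c i
    by (simp add: cnt_take_rep diff_diff_add del: One_nat_def)
  show ?case
  proof
    assume L: "\<forall>i. cnt 1 (take i (RW (ab # R))) \<le> cnt 0 (take i (RW (ab # R))) + d"
    then have L': "\<forall>i. cnt 1 (take i (RW ((a,b)#R))) \<le> cnt 0 (take i (RW ((a,b)#R))) + d" using ab by simp
    have b: "b \<le> a + d" using L'[rule_format, of "a+b"] by (simp add: ct)
    have "\<forall>i. cnt 1 (take i (RW R)) \<le> cnt 0 (take i (RW R)) + (a + d - b)"
    proof
      fix i
      show "cnt 1 (take i (RW R)) \<le> cnt 0 (take i (RW R)) + (a + d - b)"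
        using L'[rule_format, of "a+b+i"] b by (simp add: ct)
    qed
    then have "ballot R (a + d - b)" using IH by simp
    then show "ballot (ab # R) d" using b ab ballot_Cons by simp
  next
    assume B: "ballot (ab # R) d"
    then have b: "b \<le> a + d" and BR: "ballot R (a + d - b)" using ballot_Cons ab by auto
    have I: "\<forall>i. cnt 1 (take i (RW R)) \<le> cnt 0 (take i (RW R)) + (a + d - b)" using IH BR by simp
    show "\<forall>i. cnt 1 (take i (RW (ab # R))) \<le> cnt 0 (take i (RW (ab # R))) + d"
    proof
      fix i
      show "cnt 1 (take i (RW (ab # R))) \<le> cnt 0 (take i (RW (ab # R))) + d"
      proof (cases "i \<le> a + b")
        case True
        then show ?thesis using b by (simp add: ct ab)
      next
        case False
        then show ?thesis using I[rule_format, of "i - a - b"] b by (simp add: ct ab)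
      qed
    qed
  qed
qed

lemma ex_less_Suc: "(\<exists>m < Suc n. P m) \<longleftrightarrow> P 0 \<or> (\<exists>m < n. P (Suc m))"
  by (metis less_Suc_eq_0_disj Suc_less_eq)

lemma bal_RW: "posR R \<Longrightarrow> ballot R d \<Longrightarrow>
  (i \<le> length (RW R) \<and> cnt 0 (take i (RW R)) + d = cnt 1 (take i (RW R))) \<longleftrightarrow>
  ((i = 0 \<and> d = 0) \<or> (\<exists>m < length R. i = pa R ! m + pb R ! m \<and> pa R ! m + d = pb R ! m))"
proof (induction R arbitrary: d i)
  case Nil
  then show ?case by simp
next
  case (Cons ab R)
  obtain a b where ab: "ab = (a, b)" by fastforce
  have p: "0 < a" "0 < b" "posR R" using Cons.prems ab by auto
  have b: "b \<le> a + d" and BR: "ballot R (a + d - b)" using ballot_Cons Cons.prems ab by auto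
  have IH: "(i' \<le> length (RW R) \<and> cnt 0 (take i' (RW R)) + (a + d - b) = cnt 1 (take i' (RW R))) \<longleftrightarrow>
    ((i' = 0 \<and> a + d - b = 0) \<or> (\<exists>m < length R. i' = pa R ! m + pb R ! m \<and> pa R ! m + (a + d - b) = pb R ! m))" for i'
    using Cons.IH p BR by simp
  have ct: "cnt c (take i (RW ((a,b)#R))) = (if 0 = c then min i a else 0) +
     ((if 1 = c then min (i - a) b else 0) + cnt c (take (i - a - b) (RW R)))" for c i
    by (simp add: cnt_take_rep diff_diff_add del: One_nat_def)
  have R: "(\<exists>m < length ((a,b)#R). i = pa ((a,b)#R) ! m + pb ((a,b)#R) ! m \<and> pa ((a,b)#R) ! m + d = pb ((a,b)#R) ! m)
     \<longleftrightarrow> (i = a + b \<and> a + d = b) \<or> (\<exists>m < length R. i = a + pa R ! m + (b + pb R ! m) \<and> a + pa R ! m + d = b + pb R ! m)"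
    by (auto simp: ex_less_Suc pa_def pb_def)
  have lenR: "length (RW ((a,b)#R)) = a + b + length (RW R)" by simp
  show ?case
  proof (cases "i \<le> a + b")
    case True
    have "\<not> (\<exists>m < length R. i = a + pa R ! m + (b + pb R ! m) \<and> a + pa R ! m + d = b + pb R ! m)"
    proof
      assume "\<exists>m < length R. i = a + pa R ! m + (b + pb R ! m) \<and> a + pa R ! m + d = b + pb R ! m"
      then obtain m where m: "m < length R" "i = a + pa R ! m + (b + pb R ! m)" by blast
      have "0 < pa R ! m + pb R ! m"
      proof -
        obtain a' b' R' where "R = (a',b') # R'" using m by (cases R) auto
        then show ?thesis using p m by (cases m) (auto simp: pa_def pb_def)
      qed
      then show False using m True by simp
    qed
    then show ?thesis unfolding ab R using True b p by (auto simp: ct)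
  next
    case False
    then show ?thesis unfolding ab R lenR using b p IH[of "i - a - b"] by (auto simp: ct)
  qed
qed

lemma takeWhile_eq_rep: "takeWhile (\<lambda>x. x = c) w = replicate (length (takeWhile (\<lambda>x. x = c) w)) c"
  by (induction w) auto

lemma RW_decomp: "set w \<subseteq> {0, 1} \<Longrightarrow> w = [] \<or> (hd w = 0 \<and> last w = 1) \<Longrightarrow> \<exists>R. posR R \<and> w = RW R"
proof (induction "length w" arbitrary: w rule: less_induct)
  case less
  show ?case
  proof (cases "w = []")
    case True
    then show ?thesis by (intro exI[of _ "[]"]) simp
  next
    case False
    then have hw: "hd w = 0" "last w = 1" using less.prems by auto
    define a where "a = length (takeWhile (\<lambda>x. x = 0) w)"
    define w1 where "w1 = dropWhile (\<lambda>x. x = 0) w"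
    have wa: "w = replicate a 0 @ w1"
    proof -
      have "w = takeWhile (\<lambda>x. x = 0) w @ w1" unfolding w1_def by simp
      also have "takeWhile (\<lambda>x. x = 0) w = replicate a 0" unfolding a_def by (rule takeWhile_eq_rep)
      finally show ?thesis .
    qed
    have a0: "0 < a" using False hw unfolding a_def by (cases w) auto
    have w1ne: "w1 \<noteq> []"
    proof
      assume "w1 = []"
      then have "last w = 0" using wa a0 by simp
      then show False using hw by simp
    qed
    have s1: "set w1 \<subseteq> {0,1}" using less.prems(1) wa by auto
    have h1: "hd w1 = 1"
    proof -
      have "hd w1 \<noteq> 0" unfolding w1_def using w1ne[unfolded w1_def] by (rule hd_dropWhile)
      moreover have "hd w1 \<in> {0,1}" using s1 w1ne hd_in_set by blast
      ultimately show ?thesis by auto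
    qed
    define b where "b = length (takeWhile (\<lambda>x. x = 1) w1)"
    define w2 where "w2 = dropWhile (\<lambda>x. x = 1) w1"
    have wb: "w1 = replicate b 1 @ w2"
    proof -
      have "w1 = takeWhile (\<lambda>x. x = 1) w1 @ w2" unfolding w2_def by simp
      also have "takeWhile (\<lambda>x. x = 1) w1 = replicate b 1" unfolding b_def by (rule takeWhile_eq_rep)
      finally show ?thesis .
    qed
    have b0: "0 < b" using w1ne h1 unfolding b_def by (cases w1) auto
    have s2: "set w2 \<subseteq> {0,1}" using s1 wb by auto
    have c2: "w2 = [] \<or> (hd w2 = 0 \<and> last w2 = 1)"
    proof (cases "w2 = []")
      case False
      have "hd w2 \<noteq> 1" unfolding w2_def using False[unfolded w2_def] by (rule hd_dropWhile)
      moreover have "hd w2 \<in> {0,1}" using s2 False hd_in_set by blast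
      moreover have "last w2 = last w" using wa wb False by simp
      ultimately show ?thesis using hw by auto
    qed simp
    have "length w2 < length w" using wa wb a0 by simp
    then obtain R where R: "posR R" "w2 = RW R" using less.hyps s2 c2 by blast
    show ?thesis
      by (rule exI[of _ "(a,b) # R"]) (use R a0 b0 wa wb in simp)
  qed
qed



definition path :: "nat set \<Rightarrow> nat set \<Rightarrow> nat list \<Rightarrow> int list" where
  "path A B cs = map (\<lambda>c. (if c \<in> B then 1 else 0) - (if c \<in> A then 1 else 0)) cs"

definition BALs :: "nat set \<Rightarrow> nat set \<Rightarrow> bool" where
  "BALs A B \<longleftrightarrow> (\<forall>y. card {x\<in>A. x < y} \<le> card {x\<in>B. x < y})"

definition Qs :: "nat set \<Rightarrow> nat set \<Rightarrow> nat set" where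
  "Qs A B = {x \<in> A \<inter> B. card {y\<in>A. y < x} = card {y\<in>B. y < x}}"

lemma sum_path_gen: "distinct L \<Longrightarrow>
  sum_list (map (\<lambda>c. (if c \<in> B then 1 else 0) - (if c \<in> A then 1 else 0) :: int) L)
   = int (card (B \<inter> set L)) - int (card (A \<inter> set L))"
proof (induction L)
  case Nil
  then show ?case by simp
next
  case (Cons x L)
  have fin: "finite (B \<inter> set L)" "finite (A \<inter> set L)" by auto
  have "B \<inter> set (x # L) = (if x \<in> B then insert x (B \<inter> set L) else B \<inter> set L)" by auto
  moreover have "A \<inter> set (x # L) = (if x \<in> A then insert x (A \<inter> set L) else A \<inter> set L)" by auto
  ultimately show ?case using Cons fin by (auto simp: card_insert_if)
qed

lemma take_sorted_lt: "sorted_wrt (<) (L::nat list) \<Longrightarrow> t < length L \<Longrightarrow> set (take t L) = {x\<in>set L. x < L ! t}"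
proof safe
  fix x assume s: "sorted_wrt (<) L" and t: "t < length L" and x: "x \<in> set (take t L)"
  then obtain j where j: "j < t" "x = L ! j" by (auto simp: in_set_conv_nth)
  then show "x \<in> set L" using t by auto
  show "x < L ! t" using j s t sorted_wrt_nth_less by blast
next
  fix x assume s: "sorted_wrt (<) L" and t: "t < length L" and x: "x \<in> set L" "x < L ! t"
  then obtain j where j: "j < length L" "x = L ! j" by (auto simp: in_set_conv_nth)
  have "j < t"
  proof (rule ccontr)
    assume "\<not> j < t"
    then have "t = j \<or> t < j" by auto
    then show False using s j x t sorted_wrt_nth_less[of "(<)" L t j] by auto
  qed
  then show "x \<in> set (take t L)" using j t by (auto simp: in_set_conv_nth)
qed

lemma exists_take: "sorted_wrt (<) (L::nat list) \<Longrightarrow> \<exists>t \<le> length L. set (take t L) = {x\<in>set L. x < (y::nat)}"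
proof (induction L)
  case Nil
  then show ?case by simp
next
  case (Cons a L)
  show ?case
  proof (cases "a < y")
    case True
    obtain t where t: "t \<le> length L" "set (take t L) = {x\<in>set L. x < y}" using Cons by auto
    show ?thesis by (rule exI[of _ "Suc t"]) (use t True in auto)
  next
    case False
    have "{x\<in>set (a # L). x < y} = {}" using False Cons.prems by auto
    then show ?thesis by (intro exI[of _ 0]) auto
  qed
qed

lemma rank_sorted: "sorted_wrt (<) (L::nat list) \<Longrightarrow> m < length L \<Longrightarrow> card {x\<in>set L. x < L ! m} = m"
proof -
  assume s: "sorted_wrt (<) L" and m: "m < length L"
  have "distinct L" using s by (simp add: strict_sorted_iff)
  then have "card (set (take m L)) = m" using m by (simp add: distinct_card)
  then show ?thesis using take_sorted_lt[OF s m] by simp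
qed

lemma path_len[simp]: "length (path A B cs) = length cs" by (simp add: path_def)

lemma path_nth: "t < length cs \<Longrightarrow> path A B cs ! t = (if cs ! t \<in> B then 1 else 0) - (if cs ! t \<in> A then 1 else 0)"
  by (simp add: path_def)

lemma sum_take_path: "distinct cs \<Longrightarrow>
  sum_list (take t (path A B cs)) = int (card (B \<inter> set (take t cs))) - int (card (A \<inter> set (take t cs)))"
  unfolding path_def take_map by (rule sum_path_gen) simp

lemma path_motzkin:
  assumes s: "sorted_wrt (<) cs" and U: "A \<union> B = set cs"
  shows "motzkin (length cs) (path A B cs) \<longleftrightarrow> card A = card B \<and> BALs A B"
proof -
  have d: "distinct cs" using s by (simp add: strict_sorted_iff)
  have fA: "finite A" "finite B" using U by (metis finite_Un finite_set)+
  have AB: "A \<subseteq> set cs" "B \<subseteq> set cs" using U by auto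
  have st: "sum_list (take t (path A B cs)) = int (card (B \<inter> set (take t cs))) - int (card (A \<inter> set (take t cs)))" for t
    using sum_take_path[OF d] .
  have vals: "set (path A B cs) \<subseteq> {1, -1, 0}" by (auto simp: path_def split: if_splits)
  have tot: "sum_list (path A B cs) = int (card B) - int (card A)"
    using st[of "length cs"] AB by (simp add: Int_absorb2)
  have sub: "A \<inter> {x\<in>set cs. x < y} = {x\<in>A. x < y}" "B \<inter> {x\<in>set cs. x < y} = {x\<in>B. x < y}" for y
    using AB by auto
  show ?thesis
  proof
    assume M: "motzkin (length cs) (path A B cs)"
    then have "sum_list (path A B cs) = 0" by (simp add: motzkin_def)
    then have cAB: "card A = card B" using tot by simp
    have "BALs A B" unfolding BALs_def
    proof
      fix y
      obtain t where t: "t \<le> length cs" "set (take t cs) = {x\<in>set cs. x < y}" using exists_take[OF s] by blast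
      have "sum_list (take t (path A B cs)) \<ge> 0" using M t by (simp add: motzkin_def)
      then show "card {x\<in>A. x < y} \<le> card {x\<in>B. x < y}" using st[of t] t sub by simp
    qed
    then show "card A = card B \<and> BALs A B" using cAB by simp
  next
    assume H: "card A = card B \<and> BALs A B"
    have "sum_list (take t (path A B cs)) \<ge> 0" if "t \<le> length cs" for t
    proof (cases "t < length cs")
      case True
      have "set (take t cs) = {x\<in>set cs. x < cs ! t}" using take_sorted_lt[OF s True] .
      then show ?thesis using st[of t] sub H by (simp add: BALs_def)
    next
      case False
      then show ?thesis using tot H by simp
    qed
    then show "motzkin (length cs) (path A B cs)" unfolding motzkin_def using vals tot H by simp
  qed
qed

lemma path_flat0:
  assumes s: "sorted_wrt (<) cs" and U: "A \<union> B = set cs"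
  shows "flat0 (path A B cs) = card (Qs A B)"
proof -
  have d: "distinct cs" using s by (simp add: strict_sorted_iff)
  have AB: "A \<subseteq> set cs" "B \<subseteq> set cs" using U by auto
  have sub: "A \<inter> {x\<in>set cs. x < y} = {x\<in>A. x < y}" "B \<inter> {x\<in>set cs. x < y} = {x\<in>B. x < y}" for y
    using AB by auto
  have "bij_betw (\<lambda>t. cs ! t) {i. i < length (path A B cs) \<and> path A B cs ! i = 0 \<and> sum_list (take i (path A B cs)) = 0} (Qs A B)"
  proof (rule bij_betw_imageI)
    show "inj_on (\<lambda>t. cs ! t) {i. i < length (path A B cs) \<and> path A B cs ! i = 0 \<and> sum_list (take i (path A B cs)) = 0}"
      using d by (auto simp: inj_on_def nth_eq_iff_index_eq)
  next
    have e: "(path A B cs ! t = 0 \<and> sum_list (take t (path A B cs)) = 0) \<longleftrightarrow> cs ! t \<in> Qs A B" if t: "t < length cs" for t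
    proof -
      have "cs ! t \<in> A \<union> B" using U t by auto
      moreover have "sum_list (take t (path A B cs)) = int (card {x\<in>B. x < cs ! t}) - int (card {x\<in>A. x < cs ! t})"
        using sum_take_path[OF d, of t A B] take_sorted_lt[OF s t] sub by simp
      ultimately show ?thesis using t by (auto simp: path_nth Qs_def)
    qed
    show "(\<lambda>t. cs ! t) ` {i. i < length (path A B cs) \<and> path A B cs ! i = 0 \<and> sum_list (take i (path A B cs)) = 0} = Qs A B"
    proof safe
      fix t assume "t < length (path A B cs)" "path A B cs ! t = 0" "sum_list (take t (path A B cs)) = 0"
      then show "cs ! t \<in> Qs A B" using e[of t] by simp
    next
      fix x assume x: "x \<in> Qs A B"
      then have "x \<in> set cs" using AB by (auto simp: Qs_def)
      then obtain t where t: "t < length cs" "x = cs ! t" by (auto simp: in_set_conv_nth)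
      then show "x \<in> (\<lambda>t. cs ! t) ` {i. i < length (path A B cs) \<and> path A B cs ! i = 0 \<and> sum_list (take i (path A B cs)) = 0}"
        using e[OF t(1)] x by auto
    qed
  qed
  then show ?thesis unfolding flat0_def by (rule bij_betw_same_card)
qed



lemma psums_sorted: "\<forall>x\<in>set xs. 0 < x \<Longrightarrow> sorted_wrt (<) (psums xs) \<and> (\<forall>y\<in>set (psums xs). 0 < y)"
proof (induction xs)
  case Nil
  then show ?case by simp
next
  case (Cons x xs)
  then show ?case by (auto simp: sorted_wrt_map)
qed

lemma last_psums: "xs \<noteq> [] \<Longrightarrow> last (psums xs) = sum_list xs"
proof (induction xs)
  case Nil
  then show ?case by simp
next
  case (Cons x xs)
  then show ?case by (cases xs) (auto simp: last_map)
qed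

lemma psums_inj: "psums xs = psums ys \<Longrightarrow> xs = ys"
proof (induction xs arbitrary: ys)
  case Nil
  then show ?case by (cases ys) auto
next
  case (Cons x xs)
  then obtain y ys' where ys: "ys = y # ys'" by (cases ys) auto
  with Cons.prems have "x = y" "map ((+) x) (psums xs) = map ((+) x) (psums ys')" by auto
  then have "psums xs = psums ys'" by (simp add: inj_map_eq_map inj_def)
  then show ?case using Cons.IH ys \<open>x = y\<close> by simp
qed

fun difs :: "nat \<Rightarrow> nat list \<Rightarrow> nat list" where
  "difs c [] = []"
| "difs c (x # L) = (x - c) # difs x L"

lemma length_difs[simp]: "length (difs c L) = length L"
  by (induction L arbitrary: c) auto

lemma psums_difs: "sorted_wrt (\<le>) (c # L) \<Longrightarrow> psums (difs c L) = map (\<lambda>x. x - c) L"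
proof (induction L arbitrary: c)
  case Nil
  then show ?case by simp
next
  case (Cons x L)
  then have "psums (difs x L) = map (\<lambda>y. y - x) L" by simp
  then show ?case using Cons.prems by auto
qed

lemma difs_psums: "difs c (map ((+) c) (psums X)) = X"
proof (induction X arbitrary: c)
  case Nil
  then show ?case by simp
next
  case (Cons x X)
  have e: "(+) c \<circ> (+) x = (+) (c + x)" by (auto simp: fun_eq_iff)
  show ?case using Cons[of "c + x"] by (simp add: e)
qed

lemma difs_pos: "sorted_wrt (<) (c # L) \<Longrightarrow> \<forall>x\<in>set (difs c L). 0 < x"
proof (induction L arbitrary: c)
  case Nil
  then show ?case by simp
next
  case (Cons x L)
  then show ?case by auto
qed

lemma cnt01: "set w \<subseteq> {0, 1} \<Longrightarrow> cnt 0 w + cnt 1 w = length w"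
  by (induction w) auto

lemma set_RW: "set (RW R) \<subseteq> {0, 1}"
  by (induction R) auto

lemma BALs_of_le:
  assumes sA: "sorted_wrt (<) LA" and sB: "sorted_wrt (<) LB" and len: "length LA = length LB"
    and le: "\<forall>m < length LA. LB ! m \<le> LA ! m"
  shows "BALs (set LA) (set LB)"
  unfolding BALs_def
proof
  fix y :: nat
  have dA: "distinct LA" and dB: "distinct LB" using sA sB by (simp_all add: strict_sorted_iff)
  have eA: "{x\<in>set LA. x < y} = (\<lambda>m. LA ! m) ` {m. m < length LA \<and> LA ! m < y}"
    by (auto simp: in_set_conv_nth)
  have eB: "{x\<in>set LB. x < y} = (\<lambda>m. LB ! m) ` {m. m < length LA \<and> LB ! m < y}"
    using len by (auto simp: in_set_conv_nth)
  have cA: "card {x\<in>set LA. x < y} = card {m. m < length LA \<and> LA ! m < y}"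
    unfolding eA by (rule card_image) (use dA in \<open>auto simp: inj_on_def nth_eq_iff_index_eq\<close>)
  have cB: "card {x\<in>set LB. x < y} = card {m. m < length LA \<and> LB ! m < y}"
    unfolding eB by (rule card_image) (use dB len in \<open>auto simp: inj_on_def nth_eq_iff_index_eq\<close>)
  have "{m. m < length LA \<and> LA ! m < y} \<subseteq> {m. m < length LA \<and> LB ! m < y}"
    using le by fastforce
  then have "card {m. m < length LA \<and> LA ! m < y} \<le> card {m. m < length LA \<and> LB ! m < y}"
    by (rule card_mono[rotated]) simp
  then show "card {x\<in>set LA. x < y} \<le> card {x\<in>set LB. x < y}" using cA cB by simp
qed

lemma le_of_BALs:
  assumes sA: "sorted_wrt (<) LA" and sB: "sorted_wrt (<) LB" and len: "length LA = length LB"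
    and B: "BALs (set LA) (set LB)"
  shows "\<forall>m < length LA. LB ! m \<le> LA ! m"
proof (intro allI impI)
  fix m assume m: "m < length LA"
  show "LB ! m \<le> LA ! m"
  proof (rule ccontr)
    assume c: "\<not> LB ! m \<le> LA ! m"
    have "{x\<in>set LA. x < Suc (LA ! m)} = insert (LA ! m) {x\<in>set LA. x < LA ! m}"
      using m by auto
    then have c1: "card {x\<in>set LA. x < Suc (LA ! m)} = Suc m"
      using rank_sorted[OF sA m] by simp
    have "{x\<in>set LB. x < Suc (LA ! m)} \<subseteq> {x\<in>set LB. x < LB ! m}" using c by auto
    then have "card {x\<in>set LB. x < Suc (LA ! m)} \<le> m"
      using rank_sorted[OF sB, of m] m len card_mono[of "{x\<in>set LB. x < LB ! m}"] by simp
    then show False using B c1 unfolding BALs_def by (metis Suc_n_not_le_n le_trans)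
  qed
qed



lemma psums_Nil_iff[simp]: "psums xs = [] \<longleftrightarrow> xs = []"
  by (cases xs) auto

context
  fixes R :: "(nat \<times> nat) list" and n :: nat
  assumes pR: "posR R" and ne: "R \<noteq> []" and sa: "sum_list (map fst R) = n"
    and sb: "sum_list (map snd R) = n" and bal: "ballot R 0"
begin

lemma an_pa: "pa R = butlast (pa R) @ [n]" "pb R = butlast (pb R) @ [n]"
proof -
  have "pa R \<noteq> []" "pb R \<noteq> []" using ne by (simp_all add: pa_def pb_def)
  moreover have "last (pa R) = n" "last (pb R) = n" using ne sa sb last_psums
    by (simp_all add: pa_def pb_def)
  ultimately show "pa R = butlast (pa R) @ [n]" "pb R = butlast (pb R) @ [n]"
    by (metis append_butlast_last_id)+
qed

lemma an_sorted: "sorted_wrt (<) (butlast (pa R) @ [n])" "sorted_wrt (<) (butlast (pb R) @ [n])"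
   "\<forall>x\<in>set (pa R). 0 < x" "\<forall>x\<in>set (pb R). 0 < x"
proof -
  have "\<forall>x\<in>set (map fst R). 0 < x" "\<forall>x\<in>set (map snd R). 0 < x" using pR by (auto simp: posR_def)
  then have "sorted_wrt (<) (pa R) \<and> (\<forall>y\<in>set (pa R). 0 < y)" "sorted_wrt (<) (pb R) \<and> (\<forall>y\<in>set (pb R). 0 < y)"
    using psums_sorted unfolding pa_def pb_def by blast+
  then show "sorted_wrt (<) (butlast (pa R) @ [n])" "sorted_wrt (<) (butlast (pb R) @ [n])"
   "\<forall>x\<in>set (pa R). 0 < x" "\<forall>x\<in>set (pb R). 0 < x"
    by (simp_all only: an_pa(1)[symmetric] an_pa(2)[symmetric]) blast+
qed

lemma an_len: "length (butlast (pa R)) = length (butlast (pb R))"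
  by (simp add: pa_def pb_def)

lemma an_dyck: "dyck n (RW R)"
proof -
  have "\<forall>i. cnt 1 (take i (RW R)) \<le> cnt 0 (take i (RW R)) + 0" using prefix_RW[OF pR] bal by blast
  then show ?thesis unfolding dyck_def using set_RW sa sb by simp
qed

lemma an_lt: "\<forall>x\<in>set (butlast (pa R)). x < n" "\<forall>x\<in>set (butlast (pb R)). x < n"
  using an_sorted(1,2) by (auto simp: sorted_wrt_append)

lemma an_setpa: "set (pa R) = insert n (set (butlast (pa R)))" "set (pb R) = insert n (set (butlast (pb R)))"
  by (subst an_pa(1), simp) (subst an_pa(2), simp)

lemma an_a0: "1 \<le> i \<Longrightarrow> i < n \<Longrightarrow> (pos 0 (RW R) (i+1) \<noteq> pos 0 (RW R) i + 1) \<longleftrightarrow> i \<in> set (butlast (pa R))"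
  using a0_RW[OF pR, of i] sa an_setpa(1) by simp

lemma an_b1: "1 \<le> i \<Longrightarrow> i < n \<Longrightarrow> (pos 1 (RW R) (i+1) \<noteq> pos 1 (RW R) i + 1) \<longleftrightarrow> i \<in> set (butlast (pb R))"
  using b1_RW[OF pR, of i] sb an_setpa(2) by simp

lemma an_le: "\<forall>m < length (butlast (pa R)). butlast (pb R) ! m \<le> butlast (pa R) ! m"
proof (intro allI impI)
  fix m assume m: "m < length (butlast (pa R))"
  then have "m < length R" by (simp add: pa_def)
  then have "pb R ! m \<le> pa R ! m" using bal by (simp add: ballot_def)
  then show "butlast (pb R) ! m \<le> butlast (pa R) ! m" using m an_len by (simp add: nth_butlast)
qed

lemma an_BALs: "BALs (set (butlast (pa R))) (set (butlast (pb R)))"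
  "card (set (butlast (pa R))) = card (set (butlast (pb R)))"
proof -
  have s: "sorted_wrt (<) (butlast (pa R))" "sorted_wrt (<) (butlast (pb R))"
    using an_sorted(1,2) by (auto simp: sorted_wrt_append)
  then show "BALs (set (butlast (pa R))) (set (butlast (pb R)))" using BALs_of_le an_len an_le by blast
  have "distinct (butlast (pa R))" "distinct (butlast (pb R))" using s by (simp_all add: strict_sorted_iff)
  then show "card (set (butlast (pa R))) = card (set (butlast (pb R)))" using an_len by (simp add: distinct_card)
qed

lemma an_hset: "{j. j \<le> n \<and> cnt 0 (take (2*j) (RW R)) = j \<and> cnt 1 (take (2*j) (RW R)) = j}
   = {0} \<union> {x. \<exists>m < length R. pa R ! m = x \<and> pb R ! m = x}"
proof -
  have len: "length (RW R) = 2 * n" using length_RW sa sb by simp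
  have e: "(j \<le> n \<and> cnt 0 (take (2*j) (RW R)) = j \<and> cnt 1 (take (2*j) (RW R)) = j) \<longleftrightarrow>
        (2*j \<le> length (RW R) \<and> cnt 0 (take (2*j) (RW R)) + 0 = cnt 1 (take (2*j) (RW R)))" for j
  proof -
    have c: "cnt 0 (take (2*j) (RW R)) + cnt 1 (take (2*j) (RW R)) = length (take (2*j) (RW R))"
      using set_RW by (intro cnt01) (meson order_trans set_take_subset)
    show ?thesis using c len by auto
  qed
  show ?thesis
  proof (intro set_eqI)
    fix j
    have "j \<in> {j. j \<le> n \<and> cnt 0 (take (2*j) (RW R)) = j \<and> cnt 1 (take (2*j) (RW R)) = j} \<longleftrightarrow>
        ((2*j = 0 \<and> (0::nat) = 0) \<or> (\<exists>m < length R. 2*j = pa R ! m + pb R ! m \<and> pa R ! m + 0 = pb R ! m))"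
      using e[of j] bal_RW[OF pR bal, of "2*j"] by simp
    also have "\<dots> \<longleftrightarrow> j \<in> {0} \<union> {x. \<exists>m < length R. pa R ! m = x \<and> pb R ! m = x}"
    proof -
      have "(2*j = pa R ! m + pb R ! m \<and> pa R ! m + 0 = pb R ! m) \<longleftrightarrow> (pa R ! m = j \<and> pb R ! m = j)" for m
        by arith
      then show ?thesis by simp
    qed
    finally show "j \<in> {j. j \<le> n \<and> cnt 0 (take (2*j) (RW R)) = j \<and> cnt 1 (take (2*j) (RW R)) = j} \<longleftrightarrow>
       j \<in> {0} \<union> {x. \<exists>m < length R. pa R ! m = x \<and> pb R ! m = x}" .
  qed
qed

lemma an_hits: "hits n (RW R) = 2 + card (Qs (set (butlast (pa R))) (set (butlast (pb R))))"
proof -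
  define LA where "LA = butlast (pa R)"
  define LB where "LB = butlast (pb R)"
  have paR: "pa R = LA @ [n]" "pb R = LB @ [n]" using an_pa LA_def LB_def by auto
  have "length (pa R) = length R" by (simp add: pa_def)
  then have lR: "length R = Suc (length LA)" using paR(1) by simp
  have lAB: "length LA = length LB" using an_len LA_def LB_def by simp
  have sA: "sorted_wrt (<) LA" "sorted_wrt (<) LB"
    using an_sorted(1,2) LA_def LB_def by (auto simp: sorted_wrt_append)
  have ltn: "\<forall>x\<in>set LA. x < n" "\<forall>x\<in>set LB. x < n" using an_lt LA_def LB_def by auto
  have pos: "\<forall>x\<in>set LA. 0 < x" using an_sorted(3) paR by auto
  have n1: "\<forall>m<length LA. pa R ! m = LA ! m \<and> pb R ! m = LB ! m" unfolding paR using lAB by (simp add: nth_append)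
  have n2: "pa R ! length LA = n" "pb R ! length LA = n" unfolding paR by (simp, simp add: lAB)
  have "{x. \<exists>m < length R. pa R ! m = x \<and> pb R ! m = x} = insert n {x. \<exists>m < length LA. LA ! m = x \<and> LB ! m = x}"
  proof (intro set_eqI iffI)
    fix x assume "x \<in> {x. \<exists>m < length R. pa R ! m = x \<and> pb R ! m = x}"
    then obtain m where m: "m < Suc (length LA)" "pa R ! m = x" "pb R ! m = x" using lR by auto
    show "x \<in> insert n {x. \<exists>m < length LA. LA ! m = x \<and> LB ! m = x}"
    proof (cases "m = length LA")
      case True then show ?thesis using m n2 by simp
    next
      case False then have "m < length LA" using m by simp
      then show ?thesis using m n1 by auto
    qed
  next
    fix x assume "x \<in> insert n {x. \<exists>m < length LA. LA ! m = x \<and> LB ! m = x}"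
    then show "x \<in> {x. \<exists>m < length R. pa R ! m = x \<and> pb R ! m = x}"
    proof
      assume "x = n" then show ?thesis using n2 lR by (intro CollectI exI[of _ "length LA"]) simp
    next
      assume "x \<in> {x. \<exists>m < length LA. LA ! m = x \<and> LB ! m = x}"
      then obtain m where "m < length LA" "LA ! m = x" "LB ! m = x" by auto
      then show ?thesis using n1 lR by (intro CollectI exI[of _ m]) simp
    qed
  qed
  also have "{x. \<exists>m < length LA. LA ! m = x \<and> LB ! m = x} = Qs (set LA) (set LB)"
  proof (intro set_eqI iffI)
    fix x assume "x \<in> {x. \<exists>m < length LA. LA ! m = x \<and> LB ! m = x}"
    then obtain m where m: "m < length LA" and eq: "LA ! m = x" "LB ! m = x" by auto
    have "card {y\<in>set LA. y < LA ! m} = m" using rank_sorted[OF sA(1) m] .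
    moreover have "card {y\<in>set LB. y < LB ! m} = m" using rank_sorted[OF sA(2)] m lAB by simp
    moreover have "LA ! m \<in> set LA" "LB ! m \<in> set LB" using m lAB by simp_all
    ultimately show "x \<in> Qs (set LA) (set LB)" using eq by (simp add: Qs_def)
  next
    fix x assume x: "x \<in> Qs (set LA) (set LB)"
    then obtain i j where ij: "i < length LA" "x = LA ! i" "j < length LB" "x = LB ! j"
      by (auto simp: Qs_def in_set_conv_nth)
    have "card {y\<in>set LA. y < x} = i" using rank_sorted[OF sA(1) ij(1)] ij by simp
    moreover have "card {y\<in>set LB. y < x} = j" using rank_sorted[OF sA(2) ij(3)] ij by simp
    ultimately have "i = j" using x by (simp add: Qs_def)
    then show "x \<in> {x. \<exists>m < length LA. LA ! m = x \<and> LB ! m = x}" using ij by auto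
  qed
  finally have H: "{j. j \<le> n \<and> cnt 0 (take (2*j) (RW R)) = j \<and> cnt 1 (take (2*j) (RW R)) = j}
      = insert 0 (insert n (Qs (set LA) (set LB)))" using an_hset by (simp add: insert_commute)
  have fin: "finite (Qs (set LA) (set LB))" by (simp add: Qs_def)
  have "0 \<notin> Qs (set LA) (set LB)" using pos by (auto simp: Qs_def)
  moreover have "n \<notin> Qs (set LA) (set LB)" using ltn by (auto simp: Qs_def)
  moreover have "0 < n" using ne sa pR by (cases R) (auto)
  ultimately have "hits n (RW R) = 2 + card (Qs (set LA) (set LB))"
    unfolding hits_def H using fin by (simp add: card_insert_if)
  then show ?thesis using LA_def LB_def by simp
qed

end



lemma diffs_difs: "diffs (c # M) = difs c M"
proof (induction M arbitrary: c)
  case Nil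
  then show ?case by (simp add: diffs_def)
next
  case (Cons x M)
  then show ?case by (simp add: diffs_def)
qed

lemma difs_inj0: "sorted_wrt (\<le>) (0 # L1) \<Longrightarrow> sorted_wrt (\<le>) (0 # L2) \<Longrightarrow> difs 0 L1 = difs 0 L2 \<Longrightarrow> L1 = L2"
proof -
  assume a: "sorted_wrt (\<le>) (0 # L1)" "sorted_wrt (\<le>) (0 # L2)" "difs 0 L1 = difs 0 L2"
  have "L1 = psums (difs 0 L1)" using psums_difs[OF a(1)] by simp
  also have "\<dots> = psums (difs 0 L2)" using a(3) by (rule arg_cong)
  also have "\<dots> = L2" using psums_difs[OF a(2)] by simp
  finally show ?thesis .
qed

lemma path_inj:
  assumes d: "distinct cs" and U1: "A1 \<union> B1 = set cs" and U2: "A2 \<union> B2 = set cs"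
    and eq: "path A1 B1 cs = path A2 B2 cs"
  shows "A1 = A2 \<and> B1 = B2"
proof -
  have "(c \<in> A1 \<longleftrightarrow> c \<in> A2) \<and> (c \<in> B1 \<longleftrightarrow> c \<in> B2)" if c: "c \<in> set cs" for c
  proof -
    obtain t where t: "t < length cs" "c = cs ! t" using c by (auto simp: in_set_conv_nth)
    have "path A1 B1 cs ! t = path A2 B2 cs ! t" using eq by simp
    then have "(if c \<in> B1 then 1 else 0) - (if c \<in> A1 then 1 else 0) =
       ((if c \<in> B2 then 1 else 0) - (if c \<in> A2 then 1 else 0) :: int)" using t by (simp add: path_nth)
    moreover have "c \<in> A1 \<union> B1" "c \<in> A2 \<union> B2" using U1 U2 c by auto
    ultimately show ?thesis by (auto split: if_splits)
  qed
  moreover have "A1 \<subseteq> set cs" "A2 \<subseteq> set cs" "B1 \<subseteq> set cs" "B2 \<subseteq> set cs" using U1 U2 by auto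
  ultimately show ?thesis by blast
qed

definition Fm :: "nat list \<Rightarrow> nat list \<Rightarrow> int list" where
  "Fm cs w = map (\<lambda>c. (if pos 1 w (c+1) \<noteq> pos 1 w c + 1 then 1 else 0)
                     - (if pos 0 w (c+1) \<noteq> pos 0 w c + 1 then 1 else 0)) cs"

lemma dyck_hd_last:
  assumes "dyck n w" "0 < n"
  shows "w = [] \<or> (hd w = 0 \<and> last w = 1)"
proof -
  have s: "set w \<subseteq> {0,1}" and c0: "cnt 0 w = n" and c1: "cnt 1 w = n"
    and pre: "\<forall>i \<le> length w. cnt 1 (take i w) \<le> cnt 0 (take i w)" using assms by (auto simp: dyck_def)
  have ne: "w \<noteq> []" using c0 assms(2) by auto
  then obtain x w' where w: "w = x # w'" by (cases w) auto
  have "cnt 1 (take 1 w) \<le> cnt 0 (take 1 w)" using pre w by auto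
  then have "x \<noteq> 1" using w by auto
  then have hx: "x = 0" using s w by auto
  obtain u y where u: "w = u @ [y]" using ne by (metis append_butlast_last_id)
  have "length u \<le> length w" using u by simp
  then have "cnt 1 (take (length u) w) \<le> cnt 0 (take (length u) w)" using pre by blast
  then have "cnt 1 u \<le> cnt 0 u" using u by simp
  moreover have "cnt 0 u + (if y = 0 then 1 else 0) = n" "cnt 1 u + (if y = 1 then 1 else 0) = n"
    using c0 c1 u by auto
  moreover have "y \<in> {0,1}" using s u by auto
  ultimately have "y = 1" by auto
  moreover have "last w = y" using u by simp
  ultimately show ?thesis using hx w by simp
qed

lemma dyck_RW:
  assumes "dyck n w" "0 < n"
  obtains R where "posR R" "w = RW R" "R \<noteq> []" "sum_list (map fst R) = n" "sum_list (map snd R) = n" "ballot R 0"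
proof -
  have "set w \<subseteq> {0,1}" using assms(1) by (simp add: dyck_def)
  then obtain R where R: "posR R" "w = RW R" using RW_decomp[of w] dyck_hd_last[OF assms] by blast
  have c: "sum_list (map fst R) = n" "sum_list (map snd R) = n" using assms R by (auto simp: dyck_def)
  then have "R \<noteq> []" using assms by auto
  have "\<forall>i. cnt 1 (take i (RW R)) \<le> cnt 0 (take i (RW R)) + 0"
  proof
    fix i
    show "cnt 1 (take i (RW R)) \<le> cnt 0 (take i (RW R)) + 0"
    proof (cases "i \<le> length w")
      case True then show ?thesis using assms R by (auto simp: dyck_def)
    next
      case False
      then have "take i w = take (length w) w" by simp
      then show ?thesis using assms R by (auto simp: dyck_def)
    qed
  qed
  then have "ballot R 0" using prefix_RW[OF R(1)] by blast
  then show ?thesis using that R c \<open>R \<noteq> []\<close> by blast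
qed



lemma sorted_0n: "0 < n \<Longrightarrow> sorted_wrt (<) L \<Longrightarrow> \<forall>x\<in>set L. 0 < x \<and> x < (n::nat) \<Longrightarrow> sorted_wrt (<) (0 # L @ [n])"
  by (auto simp: sorted_wrt_append)

lemma sorted_le_of_lt: "sorted_wrt (<) (L::nat list) \<Longrightarrow> sorted_wrt (\<le>) L"
  by (rule sorted_wrt_mono_rel) auto

context
  fixes X :: "nat list" and n :: nat
  assumes n0: "0 < n" and comp: "is_composition X n"
begin

definition "cs = butlast (psums X)"

lemma X_ne: "X \<noteq> []" using n0 comp by (auto simp: is_composition_def)

lemma psX: "psums X = cs @ [n]"
proof -
  have "last (psums X) = n" using last_psums[OF X_ne] comp by (simp add: is_composition_def)
  moreover have "psums X \<noteq> []" using X_ne by simp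
  ultimately show ?thesis unfolding cs_def by (metis append_butlast_last_id)
qed

lemma cs_props: "sorted_wrt (<) cs" "\<forall>c\<in>set cs. 0 < c \<and> c < n" "length cs = length X - 1"
proof -
  have "\<forall>x\<in>set X. 0 < x" using comp by (simp add: is_composition_def)
  then have "sorted_wrt (<) (psums X) \<and> (\<forall>y\<in>set (psums X). 0 < y)"
    by (rule psums_sorted)
  then have "sorted_wrt (<) (cs @ [n]) \<and> (\<forall>y\<in>set (cs @ [n]). 0 < y)" using psX by simp
  then show "sorted_wrt (<) cs" "\<forall>c\<in>set cs. 0 < c \<and> c < n"
    by (auto simp: sorted_wrt_append)
  show "length cs = length X - 1" unfolding cs_def by simp
qed

lemma X_difs: "X = difs 0 (cs @ [n])"
proof -
  have "difs 0 (map ((+) 0) (psums X)) = X" by (rule difs_psums)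
  moreover have "((+) (0::nat)) = id" by auto
  ultimately show ?thesis using psX by simp
qed

lemma fc_iff:
  assumes pR: "posR R" and ne: "R \<noteq> []" and sa: "sum_list (map fst R) = n"
    and sb: "sum_list (map snd R) = n" and bal: "ballot R 0"
  shows "free_comp n (RW R) = X \<longleftrightarrow> set (butlast (pa R)) \<union> set (butlast (pb R)) = set cs"
proof -
  define L where "L = filter (\<lambda>i. \<not> linked (RW R) i) [1..<n]"
  have sL: "sorted_wrt (<) L" unfolding L_def by (rule sorted_wrt_filter) (simp add: sorted_wrt_upt)
  have ltA: "\<forall>x\<in>set (butlast (pa R)). 0 < x \<and> x < n"
    using an_lt[OF pR ne sa sb bal] an_sorted(3)[OF pR ne sa sb bal] by (auto dest: in_set_butlastD)
  have ltB: "\<forall>x\<in>set (butlast (pb R)). 0 < x \<and> x < n"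
    using an_lt[OF pR ne sa sb bal] an_sorted(4)[OF pR ne sa sb bal] by (auto dest: in_set_butlastD)
  have lk: "\<not> linked (RW R) i \<longleftrightarrow> i \<in> set (butlast (pa R)) \<union> set (butlast (pb R))"
    if i: "1 \<le> i" "i < n" for i
  proof -
    have "\<not> linked (RW R) i \<longleftrightarrow> (pos 0 (RW R) (i+1) \<noteq> pos 0 (RW R) i + 1) \<or> (pos 1 (RW R) (i+1) \<noteq> pos 1 (RW R) i + 1)"
      unfolding linked_def by blast
    also have "\<dots> \<longleftrightarrow> i \<in> set (butlast (pa R)) \<or> i \<in> set (butlast (pb R))"
      using an_a0[OF pR ne sa sb bal i] an_b1[OF pR ne sa sb bal i] by blast
    finally show ?thesis by blast
  qed
  have setL: "set L = set (butlast (pa R)) \<union> set (butlast (pb R))"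
  proof (intro set_eqI iffI)
    fix i assume "i \<in> set L"
    then have i: "1 \<le> i" "i < n" "\<not> linked (RW R) i" unfolding L_def by auto
    then show "i \<in> set (butlast (pa R)) \<union> set (butlast (pb R))" using lk by blast
  next
    fix i assume i: "i \<in> set (butlast (pa R)) \<union> set (butlast (pb R))"
    then have i1: "1 \<le> i" "i < n" using ltA ltB by auto
    then have "\<not> linked (RW R) i" using i lk by blast
    then show "i \<in> set L" using i1 unfolding L_def by auto
  qed
  have ltL: "\<forall>x\<in>set L. 0 < x \<and> x < n" unfolding L_def by auto
  have fc: "free_comp n (RW R) = difs 0 (L @ [n])"
    unfolding free_comp_def L_def[symmetric] by (simp add: diffs_difs)
  show ?thesis
  proof
    assume h: "free_comp n (RW R) = X"
    have eq: "difs 0 (L @ [n]) = difs 0 (cs @ [n])"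
    proof -
      have "difs 0 (L @ [n]) = free_comp n (RW R)" using fc by (rule sym)
      also have "\<dots> = X" by (rule h)
      also have "\<dots> = difs 0 (cs @ [n])" by (rule X_difs)
      finally show ?thesis .
    qed
    have s1: "sorted_wrt (\<le>) (0 # L @ [n])" using sorted_0n[OF n0 sL ltL] by (rule sorted_le_of_lt)
    have s2: "sorted_wrt (\<le>) (0 # cs @ [n])" using sorted_0n[OF n0 cs_props(1,2)] by (rule sorted_le_of_lt)
    have "L @ [n] = cs @ [n]" by (rule difs_inj0[OF s1 s2 eq])
    then show "set (butlast (pa R)) \<union> set (butlast (pb R)) = set cs" using setL by simp
  next
    assume "set (butlast (pa R)) \<union> set (butlast (pb R)) = set cs"
    then have "set cs = set L" using setL by simp
    then have "cs = L" using strict_sorted_equal[OF sL cs_props(1)] by blast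
    have "free_comp n (RW R) = difs 0 (L @ [n])" by (rule fc)
    also have "\<dots> = difs 0 (cs @ [n])" using \<open>cs = L\<close> by (rule arg_cong[where f="\<lambda>L. difs 0 (L @ [n])", symmetric])
    also have "\<dots> = X" by (rule X_difs[symmetric])
    finally show "free_comp n (RW R) = X" .
  qed
qed

lemma Fm_RW:
  assumes pR: "posR R" and ne: "R \<noteq> []" and sa: "sum_list (map fst R) = n"
    and sb: "sum_list (map snd R) = n" and bal: "ballot R 0"
  shows "Fm cs (RW R) = path (set (butlast (pa R))) (set (butlast (pb R))) cs"
  unfolding Fm_def path_def
proof (rule map_cong[OF refl])
  fix c assume "c \<in> set cs"
  then have c: "1 \<le> c" "c < n" using cs_props(2) by auto
  show "(if pos 1 (RW R) (c + 1) \<noteq> pos 1 (RW R) c + 1 then 1 else 0) -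
         (if pos 0 (RW R) (c + 1) \<noteq> pos 0 (RW R) c + 1 then 1 else 0) =
        (if c \<in> set (butlast (pb R)) then 1 else 0) - (if c \<in> set (butlast (pa R)) then 1 else 0)"
    using an_a0[OF pR ne sa sb bal c] an_b1[OF pR ne sa sb bal c] by simp
qed


lemma sum_last_psums: "xs \<noteq> [] \<Longrightarrow> sum_list xs = last (psums xs)"
  by (simp add: last_psums)

lemma main_bij:
  assumes l2: "2 \<le> l"
  shows "\<exists>f. bij_betw f {w. dyck n w \<and> free_comp n w = X \<and> hits n w = l}
                       {p. motzkin (length X - 1) p \<and> flat0 p = l - 2}"
proof -
  define S where "S = {w. dyck n w \<and> free_comp n w = X \<and> hits n w = l}"
  define T where "T = {p. motzkin (length X - 1) p \<and> flat0 p = l - 2}"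
  have sc: "sorted_wrt (<) cs" and cr: "\<forall>c\<in>set cs. 0 < c \<and> c < n" and lc: "length cs = length X - 1"
    using cs_props by auto
  have dc: "distinct cs" using sc by (simp add: strict_sorted_iff)
  have fwd: "Fm cs w \<in> T" if w: "w \<in> S" for w
  proof -
    have w1: "dyck n w" "free_comp n w = X" "hits n w = l" using w by (auto simp: S_def)
    obtain R where R: "posR R" "w = RW R" "R \<noteq> []" "sum_list (map fst R) = n"
       "sum_list (map snd R) = n" "ballot R 0" using dyck_RW[OF w1(1) n0] by blast
    define A where "A = set (butlast (pa R))"
    define B where "B = set (butlast (pb R))"
    have U: "A \<union> B = set cs" using fc_iff[OF R(1,3,4,5,6)] w1(2) R(2) A_def B_def by simp
    have F: "Fm cs w = path A B cs" using Fm_RW[OF R(1,3,4,5,6)] R(2) A_def B_def by simp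
    have "motzkin (length cs) (path A B cs)"
      using path_motzkin[OF sc U] an_BALs[OF R(1,3,4,5,6)] A_def B_def by simp
    moreover have "flat0 (path A B cs) = l - 2"
      using path_flat0[OF sc U] an_hits[OF R(1,3,4,5,6)] A_def B_def w1(3) R(2) by simp
    ultimately show ?thesis using F lc by (simp add: T_def)
  qed
  have inj: "inj_on (Fm cs) S"
  proof (rule inj_onI)
    fix w1 w2 assume w1: "w1 \<in> S" and w2: "w2 \<in> S" and eq: "Fm cs w1 = Fm cs w2"
    have d1: "dyck n w1" "free_comp n w1 = X" using w1 by (auto simp: S_def)
    have d2: "dyck n w2" "free_comp n w2 = X" using w2 by (auto simp: S_def)
    obtain R1 where R1: "posR R1" "w1 = RW R1" "R1 \<noteq> []" "sum_list (map fst R1) = n"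
       "sum_list (map snd R1) = n" "ballot R1 0" using dyck_RW[OF d1(1) n0] by blast
    obtain R2 where R2: "posR R2" "w2 = RW R2" "R2 \<noteq> []" "sum_list (map fst R2) = n"
       "sum_list (map snd R2) = n" "ballot R2 0" using dyck_RW[OF d2(1) n0] by blast
    have U1: "set (butlast (pa R1)) \<union> set (butlast (pb R1)) = set cs" using fc_iff[OF R1(1,3,4,5,6)] d1(2) R1(2) by simp
    have U2: "set (butlast (pa R2)) \<union> set (butlast (pb R2)) = set cs" using fc_iff[OF R2(1,3,4,5,6)] d2(2) R2(2) by simp
    have "path (set (butlast (pa R1))) (set (butlast (pb R1))) cs = path (set (butlast (pa R2))) (set (butlast (pb R2))) cs"
      using eq Fm_RW[OF R1(1,3,4,5,6)] Fm_RW[OF R2(1,3,4,5,6)] R1(2) R2(2) by simp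
    then have AB: "set (butlast (pa R1)) = set (butlast (pa R2))" "set (butlast (pb R1)) = set (butlast (pb R2))"
      using path_inj[OF dc U1 U2] by auto
    have s1: "sorted_wrt (<) (butlast (pa R1))" "sorted_wrt (<) (butlast (pb R1))"
      using an_sorted(1,2)[OF R1(1,3,4,5,6)] by (auto simp: sorted_wrt_append)
    have s2: "sorted_wrt (<) (butlast (pa R2))" "sorted_wrt (<) (butlast (pb R2))"
      using an_sorted(1,2)[OF R2(1,3,4,5,6)] by (auto simp: sorted_wrt_append)
    have ba: "butlast (pa R1) = butlast (pa R2)" using strict_sorted_equal[OF s2(1) s1(1)] AB(1) by blast
    have bb: "butlast (pb R1) = butlast (pb R2)" using strict_sorted_equal[OF s2(2) s1(2)] AB(2) by blast
    have "pa R1 = pa R2"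
    proof -
      have "pa R1 = butlast (pa R1) @ [n]" by (rule an_pa(1)[OF R1(1,3,4,5,6)])
      also have "\<dots> = butlast (pa R2) @ [n]" using ba by simp
      also have "\<dots> = pa R2" by (rule an_pa(1)[OF R2(1,3,4,5,6), symmetric])
      finally show ?thesis .
    qed
    moreover have "pb R1 = pb R2"
    proof -
      have "pb R1 = butlast (pb R1) @ [n]" by (rule an_pa(2)[OF R1(1,3,4,5,6)])
      also have "\<dots> = butlast (pb R2) @ [n]" using bb by simp
      also have "\<dots> = pb R2" by (rule an_pa(2)[OF R2(1,3,4,5,6), symmetric])
      finally show ?thesis .
    qed
    ultimately have "map fst R1 = map fst R2" "map snd R1 = map snd R2"
      unfolding pa_def pb_def by (auto intro: psums_inj)
    then have "R1 = R2" by (metis zip_map_fst_snd)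
    then show "w1 = w2" using R1(2) R2(2) by simp
  qed
  have surj: "\<exists>w\<in>S. Fm cs w = p" if p: "p \<in> T" for p
  proof -
    have M: "motzkin (length cs) p" and fl: "flat0 p = l - 2" using p lc by (auto simp: T_def)
    have lp: "length p = length cs" and pv: "set p \<subseteq> {1, -1, 0}" using M by (auto simp: motzkin_def)
    define A where "A = {cs ! t | t. t < length cs \<and> p ! t \<le> 0}"
    define B where "B = {cs ! t | t. t < length cs \<and> p ! t \<ge> 0}"
    have memA: "cs ! t \<in> A \<longleftrightarrow> p ! t \<le> 0" if t: "t < length cs" for t
      using t dc unfolding A_def by (auto simp: nth_eq_iff_index_eq)
    have memB: "cs ! t \<in> B \<longleftrightarrow> p ! t \<ge> 0" if t: "t < length cs" for t
      using t dc unfolding B_def by (auto simp: nth_eq_iff_index_eq)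
    have pe: "path A B cs = p"
    proof (rule nth_equalityI)
      show "length (path A B cs) = length p" using lp by simp
    next
      fix t assume "t < length (path A B cs)"
      then have t: "t < length cs" by simp
      have "p ! t \<in> {1, -1, 0}" using pv t lp nth_mem by (metis subsetD)
      then show "path A B cs ! t = p ! t" using memA[OF t] memB[OF t] t by (auto simp: path_nth)
    qed
    have U: "A \<union> B = set cs"
    proof (intro set_eqI iffI)
      fix x assume "x \<in> A \<union> B" then show "x \<in> set cs" unfolding A_def B_def by auto
    next
      fix x assume "x \<in> set cs"
      then obtain t where t: "t < length cs" "x = cs ! t" by (auto simp: in_set_conv_nth)
      show "x \<in> A \<union> B"
      proof (cases "p ! t \<le> 0")
        case True then show ?thesis using memA[OF t(1)] t by simp
      next
        case False then show ?thesis using memB[OF t(1)] t by simp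
      qed
    qed
    have AB: "card A = card B" "BALs A B" using path_motzkin[OF sc U] M pe by auto
    have Qc: "card (Qs A B) = l - 2" using path_flat0[OF sc U] pe fl by simp
    have Ar: "\<forall>x\<in>A. 0 < x \<and> x < n" "\<forall>x\<in>B. 0 < x \<and> x < n" using U cr by auto
    have fA: "finite A" "finite B" using U by (metis finite_Un finite_set)+
    define LA where "LA = sorted_list_of_set A"
    define LB where "LB = sorted_list_of_set B"
    have sLA: "sorted_wrt (<) LA" "set LA = A" "length LA = card A" unfolding LA_def using fA by auto
    have sLB: "sorted_wrt (<) LB" "set LB = B" "length LB = card B" unfolding LB_def using fA by auto
    have lAB: "length LA = length LB" using sLA sLB AB by simp
    have le: "\<forall>m < length LA. LB ! m \<le> LA ! m" using le_of_BALs[OF sLA(1) sLB(1) lAB] AB sLA sLB by simp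
    define da where "da = difs 0 (LA @ [n])"
    define db where "db = difs 0 (LB @ [n])"
    define R where "R = zip da db"
    have ldb: "length da = length db" unfolding da_def db_def using lAB by simp
    have mf: "map fst R = da" "map snd R = db" unfolding R_def using ldb by auto
    have so1: "sorted_wrt (<) (0 # LA @ [n])" using sorted_0n[OF n0 sLA(1)] Ar sLA by simp
    have so2: "sorted_wrt (<) (0 # LB @ [n])" using sorted_0n[OF n0 sLB(1)] Ar sLB by simp
    have id0: "(\<lambda>x::nat. x - 0) = id" by auto
    have paR: "pa R = LA @ [n]" unfolding pa_def mf da_def
      using psums_difs[OF sorted_le_of_lt[OF so1]] id0 by simp
    have pbR: "pb R = LB @ [n]" unfolding pb_def mf db_def
      using psums_difs[OF sorted_le_of_lt[OF so2]] id0 by simp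
    have pR: "posR R" unfolding posR_def R_def
      using difs_pos[OF so1] difs_pos[OF so2] da_def db_def
      by (auto dest: set_zip_leftD set_zip_rightD)
    have lda: "length da \<noteq> 0" by (simp add: da_def)
    then have ne: "R \<noteq> []" unfolding R_def using ldb by auto
    have sa: "sum_list (map fst R) = n" unfolding mf
      using sum_last_psums[of da] paR mf lda unfolding pa_def by auto
    have sb: "sum_list (map snd R) = n" unfolding mf
      using sum_last_psums[of db] pbR mf lda ldb unfolding pb_def by auto
    have bal: "ballot R 0" unfolding ballot_def
    proof (intro allI impI)
      fix m assume m: "m < length R"
      have lR: "length R = Suc (length LA)" using mf(1) da_def by (metis length_map length_difs length_append_singleton)
      show "pb R ! m \<le> pa R ! m + 0"
      proof (cases "m < length LA")
        case True
        then show ?thesis unfolding paR pbR using le lAB by (simp add: nth_append)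
      next
        case False
        then have "m = length LA" using m lR by simp
        then show ?thesis unfolding paR pbR using lAB by (simp add: nth_append)
      qed
    qed
    have bA: "set (butlast (pa R)) = A" "set (butlast (pb R)) = B" using paR pbR sLA sLB by simp_all
    define w where "w = RW R"
    have "dyck n w" unfolding w_def by (rule an_dyck[OF pR ne sa sb bal])
    moreover have "free_comp n w = X" unfolding w_def using fc_iff[OF pR ne sa sb bal] bA U by simp
    moreover have "hits n w = l" unfolding w_def using an_hits[OF pR ne sa sb bal] bA Qc l2 by simp
    moreover have "Fm cs w = p" unfolding w_def using Fm_RW[OF pR ne sa sb bal] bA pe by simp
    ultimately show ?thesis unfolding S_def by blast
  qed
  have "bij_betw (Fm cs) S T"
    unfolding bij_betw_def using inj fwd surj by blast
  then show ?thesis unfolding S_def T_def by blast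
qed

end



theorem lemma4p5:
  fixes X :: "nat list" and n l :: nat
  assumes "0 < n" and "is_composition X n" and "2 \<le> l"
  shows "\<exists>f. bij_betw f {w. dyck n w \<and> free_comp n w = X \<and> hits n w = l}
                       {p. motzkin (length X - 1) p \<and> flat0 p = l - 2}"
  using main_bij[OF assms(1) assms(2) assms(3)] .

end
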